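(* Consider the reduced (limit) problem of the repeated wage theft game with fixed strategies and time-converging worker forecasts, as described in the context. If $(a,w_H,w_L,b_H,b_L)$ is feasible for this problem, then $(a,\,w_H-b_H,\,w_L-b_L,\,0,\,0)$ is also feasible and its objective value is at least that of $(a,w_H,w_L,b_H,b_L)$ (weak dominance of the honest strategy of promising $w_i-b_i$ and stealing $0$). The dominance is strict when $a>0$ and $(b_H,b_L)\neq(0,0)$.
   Context: Fix $P>0$, $y_H>y_L\ge0$, a real number $u$ and $\gamma\in(0,1]$. Let $C:[0,1)\to\mathbb{R}$ satisfy $C(0)=0$, increasing, strictly convex, twice differentiable, $C(a)\to\infty$ as $a\to1$; let $\eta:[0,\infty)\to\mathbb{R}$ be strictly convex, increasing, twice differentiable with $\eta(0)=0$. In the repeated wage theft game, in each period $t$ the employer promises wages $w_i^t$ and steals $b_i^t$ ($i\in\{H,L\}$), and the worker, forecasting theft $\hat b_i^t$ from past thefts $b_i^1,\dots,b_i^{t-1}$, chooses effort as if receiving $(w_i^t-\hat b_i^t)^+$. A forecast is time-converging if whenever $b_i^t=b_i$ for all $t\ge t_0$, $\hat b_i^t\to b_i$ as $t\to\infty$. When the employer uses a fixed strategy $(w_H,w_L,b_H,b_L)$ in every period and the worker uses a time-converging forecast, the game reduces to the following problem: choose $a,w_H,w_L,b_H,b_L$ to maximize $a\,(Py_H-w_H+b_H-\gamma\eta(b_H))+(1-a)\,(Py_L-w_L+b_L-\gamma\eta(b_L))$ subject to $a\in\arg\max_{a'\in[0,1)}\{a'(w_H-b_H)+(1-a')(w_L-b_L)-C(a')\}$;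 $a(w_H-b_H)+(1-a)(w_L-b_L)-C(a)\ge u$; $0\le b_L\le w_L$, $0\le b_H\le w_H$; $a\in[0,1)$. *)

theory Defs
  imports "HOL-Analysis.Analysis"
begin

definition strictly_convex_on :: "real set \<Rightarrow> (real \<Rightarrow> real) \<Rightarrow> bool" where
  "strictly_convex_on S f \<longleftrightarrow> convex S \<and>
     (\<forall>x\<in>S. \<forall>y\<in>S. x \<noteq> y \<longrightarrow> (\<forall>t. 0 < t \<and> t < 1 \<longrightarrow>
        f ((1 - t) * x + t * y) < (1 - t) * f x + t * f y))"

definition twice_differentiable_on :: "(real \<Rightarrow> real) \<Rightarrow> real set \<Rightarrow> bool" where
  "twice_differentiable_on f S \<longleftrightarrow> (\<exists>f' f''. \<forall>x\<in>S.
      (f has_real_derivative f' x) (at x within S) \<and>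
      (f' has_real_derivative f'' x) (at x within S))"

definition worker_util :: "(real \<Rightarrow> real) \<Rightarrow> real \<Rightarrow> real \<Rightarrow> real \<Rightarrow> real \<Rightarrow> real \<Rightarrow> real" where
  "worker_util C a' wH wL bH bL = a' * (wH - bH) + (1 - a') * (wL - bL) - C a'"

definition feasible :: "(real \<Rightarrow> real) \<Rightarrow> real \<Rightarrow> real \<Rightarrow> real \<Rightarrow> real \<Rightarrow> real \<Rightarrow> real \<Rightarrow> bool" where
  "feasible C u a wH wL bH bL \<longleftrightarrow>
     a \<in> {0..<1} \<and>
     (\<forall>a'\<in>{0..<1}. worker_util C a' wH wL bH bL \<le> worker_util C a wH wL bH bL) \<and>
     worker_util C a wH wL bH bL \<ge> u \<and>
     0 \<le> bL \<and> bL \<le> wL \<and> 0 \<le> bH \<and> bH \<le> wH"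

definition objective :: "(real \<Rightarrow> real) \<Rightarrow> real \<Rightarrow> real \<Rightarrow> real \<Rightarrow> real \<Rightarrow> real \<Rightarrow> real \<Rightarrow> real \<Rightarrow> real \<Rightarrow> real \<Rightarrow> real" where
  "objective \<eta> P yH yL \<gamma> a wH wL bH bL =
     a * (P * yH - wH + bH - \<gamma> * \<eta> bH) + (1 - a) * (P * yL - wL + bL - \<gamma> * \<eta> bL)"

end

theory Submission
  imports Defs
begin

lemma eta_pos:
  assumes cv: "strictly_convex_on {0..} \<eta>" and mo: "mono_on {0..} \<eta>" and e0: "\<eta> 0 = (0::real)"
    and b: "b > (0::real)"
  shows "\<eta> b > 0"
proof -
  have "\<eta> b \<ge> 0" using mono_onD[OF mo, of 0 b] b e0 by simp
  moreover have "\<eta> (b/2) \<ge> 0" using mono_onD[OF mo, of 0 "b/2"] b e0 by simp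
  moreover have "\<eta> ((1 - 1/2) * 0 + (1/2) * b) < (1 - 1/2) * \<eta> 0 + (1/2) * \<eta> b"
    proof -
    have "\<forall>x\<in>{0..}. \<forall>y\<in>{0..}. x \<noteq> y \<longrightarrow> (\<forall>t. 0 < t \<and> t < 1 \<longrightarrow>
        \<eta> ((1 - t) * x + t * y) < (1 - t) * \<eta> x + t * \<eta> y)"
      using cv unfolding strictly_convex_on_def by blast
    then have "\<eta> ((1 - 1/2) * 0 + (1/2) * b) < (1 - 1/2) * \<eta> 0 + (1/2) * \<eta> b"
    proof -
      have "(0::real) \<in> {0..}" "b \<in> {0..}" "(0::real) \<noteq> b" using b by auto
      with \<open>\<forall>x\<in>{0..}. _\<close> have "\<forall>t. 0 < t \<and> t < 1 \<longrightarrow>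
        \<eta> ((1 - t) * 0 + t * b) < (1 - t) * \<eta> 0 + t * \<eta> b" by blast
      from spec[OF this, of "1/2"] show ?thesis by simp
    qed
    then show ?thesis .
  qed
  ultimately show ?thesis using e0 by (simp add: mult.commute)
qed

theorem theorem3:
  fixes P yH yL u \<gamma> :: real
    and C \<eta> :: "real \<Rightarrow> real"
    and a wH wL bH bL :: real
  assumes P_pos: "P > 0"
    and y_order: "yH > yL" and yL_nonneg: "yL \<ge> 0"
    and gamma: "0 < \<gamma>" "\<gamma> \<le> 1"
    and C0: "C 0 = 0"
    and C_mono: "mono_on {0..<1} C"
    and C_convex: "strictly_convex_on {0..<1} C"
    and C_diff: "twice_differentiable_on C {0..<1}"
    and C_lim: "filterlim C at_top (at_left 1)"
    and eta_convex: "strictly_convex_on {0..} \<eta>"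
    and eta_mono: "mono_on {0..} \<eta>"
    and eta_diff: "twice_differentiable_on \<eta> {0..}"
    and eta0: "\<eta> 0 = 0"
    and feas: "feasible C u a wH wL bH bL"
  shows "feasible C u a (wH - bH) (wL - bL) 0 0
       \<and> objective \<eta> P yH yL \<gamma> a (wH - bH) (wL - bL) 0 0 \<ge> objective \<eta> P yH yL \<gamma> a wH wL bH bL
       \<and> (a > 0 \<and> (bH, bL) \<noteq> (0, 0) \<longrightarrow>
            objective \<eta> P yH yL \<gamma> a (wH - bH) (wL - bL) 0 0 > objective \<eta> P yH yL \<gamma> a wH wL bH bL)"
proof -
  have f: "a \<in> {0..<1}" "0 \<le> bL" "bL \<le> wL" "0 \<le> bH" "bH \<le> wH"
    using feas unfolding feasible_def by auto
  have nH: "\<eta> bH \<ge> 0" using mono_onD[OF eta_mono, of 0 bH] f eta0 by simp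
  have nL: "\<eta> bL \<ge> 0" using mono_onD[OF eta_mono, of 0 bL] f eta0 by simp
  have d: "objective \<eta> P yH yL \<gamma> a (wH - bH) (wL - bL) 0 0 - objective \<eta> P yH yL \<gamma> a wH wL bH bL
     = \<gamma> * (a * \<eta> bH + (1 - a) * \<eta> bL)"
    unfolding objective_def using eta0 by (simp add: algebra_simps)
  have F: "feasible C u a (wH - bH) (wL - bL) 0 0"
    using feas unfolding feasible_def worker_util_def by auto
  have G: "\<gamma> * (a * \<eta> bH + (1 - a) * \<eta> bL) \<ge> 0"
    using f nH nL gamma by (intro mult_nonneg_nonneg add_nonneg_nonneg) auto
  have S: "\<gamma> * (a * \<eta> bH + (1 - a) * \<eta> bL) > 0" if "a > 0" "(bH, bL) \<noteq> (0, 0)"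
  proof -
    have "a * \<eta> bH + (1 - a) * \<eta> bL > 0"
    proof (cases "bH = 0")
      case True
      then have "bL > 0" using that f by auto
      then have "\<eta> bL > 0" using eta_pos[OF eta_convex eta_mono eta0] by blast
      moreover have "1 - a > 0" using f by auto
      ultimately show ?thesis using True eta0 by simp
    next
      case False
      then have "bH > 0" using f by auto
      then have "\<eta> bH > 0" using eta_pos[OF eta_convex eta_mono eta0] by blast
      moreover have "(1 - a) * \<eta> bL \<ge> 0" using f nL by auto
      ultimately show ?thesis using that by (smt (verit) mult_pos_pos)
    qed
    then show ?thesis using gamma by simp
  qed
  show ?thesis using F G S d by auto
qed

end
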